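(* Let $p,q\ge0$ be integers, $n=p+q\ge1$, and $a\in\mathbb{R}_{p,q}$. Then: (a) if $n$ is even, $\displaystyle \langle a\rangle_0=\frac{1}{2^n}\sum_{J} e_J\, a\, e^J$; (b) if $n$ is odd, $\displaystyle \langle a\rangle_0=\frac{1}{2^{n+1}}\sum_{J} e_J\, a\, e^J+\frac{1}{2^{n+1}}\sum_{J} e_J\, a_*\, e^J$, where in both cases the sum runs over all strictly increasing multi-indices $J\subset\{1,\dots,n\}$ (of every length $0,1,\dots,n$, including the empty one).
   Context: $\mathbb{R}_{p,q}$ is the universal real Clifford algebra of $\mathbb{R}^n$, $n=p+q$, with basis $\{e_A\}$ indexed by strictly increasing multi-indices $A=(a_1<\dots<a_k)\subset\{1,\dots,n\}$ (with $e_\emptyset=1$, $e_A=e_{a_1}\cdots e_{a_k}$), subject to $e_i^2=1$ for $1\le i\le p$, $e_i^2=-1$ for $p+1\le i\le n$, and $e_ie_j=-e_je_i$ for $i\neq j$. Every $a\in\mathbb{R}_{p,q}$ decomposes as $a=\sum_{k=0}^n\langle a\rangle_k$ with $\langle a\rangle_k=\sum_{|A|=k}a_Ae_A$, $a_A\in\mathbb{R}$; $\langle a\rangle_0$ is the scalar part. The principal automorphism is $a_*=\sum_{k=0}^n(-1)^k\langle a\rangle_k$. Define $e^i=e_i$ if $1\le i\le p$ and $e^i=-e_i$ if $p+1\le i\le n$, and for $J=(j_1<\dots<j_k)$ set $e^J=e^{j_k}e^{j_{k-1}}\cdots e^{j_1}$ (with $e^\emptyset=1$). *)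

theory Defs
  imports Complex_Main
begin

text \<open>The universal real Clifford algebra R_{p,q} of R^n, n = p+q, realised concretely:
  an element is its coefficient family (a_A) indexed by subsets A of {1..n}
  (coefficients outside Pow {1..n} are required to be zero).  The product is the
  bilinear extension of the basis product
  e_A e_B = (-1)^(#{(a,b) in A x B. b < a}) * (prod of e_i^2 for i in A inter B) * e_(A sym-diff B),
  which is exactly what e_i^2 = 1 (i<=p), e_i^2 = -1 (p<i<=n), e_i e_j = - e_j e_i give.\<close>

type_synonym cl = "nat set \<Rightarrow> real"

definition cl_sign :: "nat \<Rightarrow> nat set \<Rightarrow> nat set \<Rightarrow> real" where
  "cl_sign p A B = (-1) ^ card {(a, b). a \<in> A \<and> b \<in> B \<and> b < a}
                 * (-1) ^ card {i \<in> A \<inter> B. p < i}"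

definition cl_mult :: "nat \<Rightarrow> nat \<Rightarrow> cl \<Rightarrow> cl \<Rightarrow> cl" where
  "cl_mult p q x y = (\<lambda>C. \<Sum>A\<in>Pow {1..p+q}. \<Sum>B\<in>Pow {1..p+q}.
      if (A - B) \<union> (B - A) = C then x A * y B * cl_sign p A B else 0)"

definition cl_basis :: "nat set \<Rightarrow> cl" where
  "cl_basis A = (\<lambda>C. if C = A then 1 else 0)"

definition cl_carrier :: "nat \<Rightarrow> nat \<Rightarrow> cl set" where
  "cl_carrier p q = {x. \<forall>A. \<not> A \<subseteq> {1..p+q} \<longrightarrow> x A = 0}"

definition cl_grade0 :: "cl \<Rightarrow> cl" where
  "cl_grade0 a = (\<lambda>C. if C = {} then a {} else 0)"

definition cl_star :: "cl \<Rightarrow> cl" where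
  "cl_star a = (\<lambda>A. (-1) ^ card A * a A)"

definition cl_up :: "nat \<Rightarrow> nat \<Rightarrow> cl" where
  "cl_up p i = (\<lambda>C. if C = {i} then (if i \<le> p then 1 else -1) else 0)"

text \<open>e^J = e^{j_k} e^{j_(k-1)} ... e^{j_1} for J = (j_1 < ... < j_k); e^{} = 1.\<close>
definition cl_upJ :: "nat \<Rightarrow> nat \<Rightarrow> nat set \<Rightarrow> cl" where
  "cl_upJ p q J = foldr (cl_mult p q) (map (cl_up p) (rev (sorted_list_of_set J))) (cl_basis {})"

end

theory Submission
  imports Defs
begin

definition mono :: "nat set \<Rightarrow> real \<Rightarrow> cl" where "mono J s = (\<lambda>A. if A = J then s else 0)"
definition ninv :: "nat set \<Rightarrow> nat set \<Rightarrow> nat" where "ninv X Y = card {(a,b). a \<in> X \<and> b \<in> Y \<and> b < a}"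
definition nneg :: "nat \<Rightarrow> nat set \<Rightarrow> nat" where "nneg p S = card {i\<in>S. p<i}"

lemma cl_sign_alt: "cl_sign p A B = (-1)^(ninv A B + nneg p (A \<inter> B))"
  by (simp add: cl_sign_def ninv_def nneg_def power_add)

lemma symdiff_iff: "((A - B) \<union> (B - A) = C) = (B = (A - C) \<union> (C - A))" by blast
lemma symdiff_iff2: "((A - B) \<union> (B - A) = C) = (A = (B - C) \<union> (C - B))" by blast

lemma mult_mono_left:
  assumes "J \<subseteq> {1..p+q}"
  shows "cl_mult p q (mono J s) x C = (if (J - C) \<union> (C - J) \<subseteq> {1..p+q} then s * x ((J - C) \<union> (C - J)) * cl_sign p J ((J - C) \<union> (C - J)) else 0)"
proof -
  let ?N = "{1..p+q}" let ?D = "(J - C) \<union> (C - J)"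
  have "cl_mult p q (mono J s) x C = (\<Sum>A\<in>Pow ?N. if A = J then (\<Sum>B\<in>Pow ?N. if (J - B) \<union> (B - J) = C then s * x B * cl_sign p J B else 0) else 0)"
    unfolding cl_mult_def mono_def apply (rule sum.cong[OF refl]) subgoal for A by (cases "A = J") (simp_all cong: if_cong) done
  also have "\<dots> = (\<Sum>B\<in>Pow ?N. if (J - B) \<union> (B - J) = C then s * x B * cl_sign p J B else 0)"
    using assms by simp
  also have "\<dots> = (\<Sum>B\<in>Pow ?N. if B = ?D then s * x B * cl_sign p J B else 0)"
    by (intro sum.cong refl) (simp only: symdiff_iff)
  also have "\<dots> = (if ?D \<subseteq> ?N then s * x ?D * cl_sign p J ?D else 0)" by simp
  finally show ?thesis .
qed

lemma mult_mono_right: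
  assumes "J \<subseteq> {1..p+q}"
  shows "cl_mult p q x (mono J s) C = (if (J - C) \<union> (C - J) \<subseteq> {1..p+q} then x ((J - C) \<union> (C - J)) * s * cl_sign p ((J - C) \<union> (C - J)) J else 0)"
proof -
  let ?N = "{1..p+q}" let ?D = "(J - C) \<union> (C - J)"
  have "cl_mult p q x (mono J s) C = (\<Sum>A\<in>Pow ?N. (\<Sum>B\<in>Pow ?N. if B = J then (if (A - J) \<union> (J - A) = C then x A * s * cl_sign p A J else 0) else 0))"
    unfolding cl_mult_def mono_def by (intro sum.cong refl) (auto cong: if_cong)
  also have "\<dots> = (\<Sum>A\<in>Pow ?N. if (A - J) \<union> (J - A) = C then x A * s * cl_sign p A J else 0)"
    using assms by simp
  also have "\<dots> = (\<Sum>A\<in>Pow ?N. if A = ?D then x A * s * cl_sign p A J else 0)"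
    by (intro sum.cong refl) (simp only: symdiff_iff2)
  also have "\<dots> = (if ?D \<subseteq> ?N then x ?D * s * cl_sign p ?D J else 0)" by simp
  finally show ?thesis .
qed

lemma basis_mono: "cl_basis J = mono J 1" by (simp add: cl_basis_def mono_def)
lemma up_mono: "cl_up p i = mono {i} (if i \<le> p then 1 else -1)" by (simp add: cl_up_def mono_def)


lemma mono_mult:
  assumes "A \<subseteq> {1..p+q}" "B \<subseteq> {1..p+q}"
  shows "cl_mult p q (mono A s) (mono B t) = mono ((A - B) \<union> (B - A)) (s * t * cl_sign p A B)"
proof
  fix C
  have e: "cl_mult p q (mono A s) (mono B t) C = (if (A - C) \<union> (C - A) \<subseteq> {1..p+q} then s * mono B t ((A - C) \<union> (C - A)) * cl_sign p A ((A - C) \<union> (C - A)) else 0)"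
      by (rule mult_mono_left[OF assms(1)])
  show "cl_mult p q (mono A s) (mono B t) C = mono ((A - B) \<union> (B - A)) (s * t * cl_sign p A B) C"
  proof (cases "(A - C) \<union> (C - A) = B")
    case True
    then have c: "C = (A - B) \<union> (B - A)" by blast
    have "cl_mult p q (mono A s) (mono B t) C = s * t * cl_sign p A B"
      unfolding e True using assms by (simp add: mono_def)
    then show ?thesis using c by (simp add: mono_def)
  next
    case False
    then have c: "C \<noteq> (A - B) \<union> (B - A)" by blast
    have "cl_mult p q (mono A s) (mono B t) C = 0"
      unfolding e using False by (simp add: mono_def)
    then show ?thesis using c by (simp add: mono_def)
  qed
qed

lemma sign_single:
  assumes "finite A" "\<forall>a\<in>A. a < b"
  shows "cl_sign p {b} A = (-1) ^ card A"
proof -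
  have "{(a, c). a \<in> {b} \<and> c \<in> A \<and> c < a} = Pair b ` A" using assms by auto
  then have c1: "card {(a, c). a \<in> {b} \<and> c \<in> A \<and> c < a} = card A"
    by (simp add: card_image inj_on_def)
  have c2: "{i \<in> {b} \<inter> A. p < i} = {}" using assms by auto
  show ?thesis unfolding cl_sign_def c1 c2 by simp
qed

lemma sign_insert:
  assumes "finite A" "\<forall>a\<in>A. a < b"
  shows "cl_sign p (insert b A) (insert b A) = cl_sign p A A * (-1) ^ card A * (if p < b then -1 else 1)"
proof -
  let ?S = "{(a, c). a \<in> A \<and> c \<in> A \<and> c < a}"
  have fin: "finite ?S" by (rule finite_subset[of _ "A \<times> A"]) (auto simp: assms)
  have "{(a, c). a \<in> insert b A \<and> c \<in> insert b A \<and> c < a} = ?S \<union> Pair b ` A" using assms by auto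
  moreover have "?S \<inter> Pair b ` A = {}" using assms by auto
  ultimately have 1: "card {(a, c). a \<in> insert b A \<and> c \<in> insert b A \<and> c < a} = card ?S + card A"
    using fin assms by (simp add: card_Un_disjoint card_image inj_on_def)
  have bA: "b \<notin> A" using assms by auto
  have 2: "card {i \<in> insert b A \<inter> insert b A. p < i} = card {i \<in> A \<inter> A. p < i} + (if p < b then 1 else 0)"
  proof (cases "p < b")
    case True
    then have "{i \<in> insert b A \<inter> insert b A. p < i} = insert b {i \<in> A \<inter> A. p < i}" by auto
    then show ?thesis using True bA assms by simp
  next
    case False
    then have "{i \<in> insert b A \<inter> insert b A. p < i} = {i \<in> A \<inter> A. p < i}" by auto
    then show ?thesis using False by simp
  qed
  show ?thesis unfolding cl_sign_def 1 2 by (simp add: power_add)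
qed

lemma upJ_mono:
  assumes "J \<subseteq> {1..p+q}"
  shows "cl_upJ p q J = mono J (cl_sign p J J)"
proof -
  have fin: "finite J" using assms finite_subset by blast
  from fin assms show ?thesis
  proof (induction J rule: finite_linorder_max_induct)
    case empty
    then show ?case by (simp add: cl_upJ_def basis_mono cl_sign_def)
  next
    case (insert b A)
    have bA: "b \<notin> A" using insert by auto
    have sl: "sorted_list_of_set (insert b A) = sorted_list_of_set A @ [b]"
      using insert bA by (simp add: sorted_list_of_set_insert sorted_insort_is_snoc less_imp_le)
    have "cl_upJ p q (insert b A) = cl_mult p q (cl_up p b) (cl_upJ p q A)"
      by (simp add: cl_upJ_def sl)
    also have "\<dots> = cl_mult p q (mono {b} (if b \<le> p then 1 else -1)) (mono A (cl_sign p A A))"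
      using insert by (simp add: up_mono)
    also have "\<dots> = mono (insert b A) (cl_sign p (insert b A) (insert b A))"
    proof -
      have "({b} - A) \<union> (A - {b}) = insert b A" using bA by auto
      then show ?thesis using insert
        by (simp add: mono_mult sign_single sign_insert)
    qed
    finally show ?case .
  qed
qed


lemma ninv_Un_left:
  assumes "finite X1" "finite X2" "finite Y" "X1 \<inter> X2 = {}"
  shows "ninv (X1 \<union> X2) Y = ninv X1 Y + ninv X2 Y"
proof -
  have "{(a,b). a \<in> X1 \<union> X2 \<and> b \<in> Y \<and> b < a} = {(a,b). a \<in> X1 \<and> b \<in> Y \<and> b < a} \<union> {(a,b). a \<in> X2 \<and> b \<in> Y \<and> b < a}" by auto
  moreover have "finite {(a,b). a \<in> X1 \<and> b \<in> Y \<and> b < a}"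
    by (rule finite_subset[of _ "X1 \<times> Y"]) (auto simp: assms)
  moreover have "finite {(a,b). a \<in> X2 \<and> b \<in> Y \<and> b < a}"
    by (rule finite_subset[of _ "X2 \<times> Y"]) (auto simp: assms)
  moreover have "{(a,b). a \<in> X1 \<and> b \<in> Y \<and> b < a} \<inter> {(a,b). a \<in> X2 \<and> b \<in> Y \<and> b < a} = {}" using assms by auto
  ultimately show ?thesis unfolding ninv_def by (simp add: card_Un_disjoint)
qed

lemma ninv_Un_right:
  assumes "finite X" "finite Y1" "finite Y2" "Y1 \<inter> Y2 = {}"
  shows "ninv X (Y1 \<union> Y2) = ninv X Y1 + ninv X Y2"
proof -
  have "{(a,b). a \<in> X \<and> b \<in> Y1 \<union> Y2 \<and> b < a} = {(a,b). a \<in> X \<and> b \<in> Y1 \<and> b < a} \<union> {(a,b). a \<in> X \<and> b \<in> Y2 \<and> b < a}" by auto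
  moreover have "finite {(a,b). a \<in> X \<and> b \<in> Y1 \<and> b < a}"
    by (rule finite_subset[of _ "X \<times> Y1"]) (auto simp: assms)
  moreover have "finite {(a,b). a \<in> X \<and> b \<in> Y2 \<and> b < a}"
    by (rule finite_subset[of _ "X \<times> Y2"]) (auto simp: assms)
  moreover have "{(a,b). a \<in> X \<and> b \<in> Y1 \<and> b < a} \<inter> {(a,b). a \<in> X \<and> b \<in> Y2 \<and> b < a} = {}" using assms by auto
  ultimately show ?thesis unfolding ninv_def by (simp add: card_Un_disjoint)
qed

lemma ninv_swap:
  assumes "finite X" "finite Y" "X \<inter> Y = {}"
  shows "ninv X Y + ninv Y X = card X * card Y"
proof -
  let ?S1 = "{(a,b). a \<in> X \<and> b \<in> Y \<and> b < a}"
  let ?S2 = "{(a,b). a \<in> X \<and> b \<in> Y \<and> a < b}"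
  have "{(a,b). a \<in> Y \<and> b \<in> X \<and> b < a} = prod.swap ` ?S2" by auto
  then have c2: "ninv Y X = card ?S2" unfolding ninv_def by (simp add: card_image)
  have u: "X \<times> Y = ?S1 \<union> ?S2" using assms by auto
  have f1: "finite ?S1" by (rule finite_subset[of _ "X \<times> Y"]) (auto simp: assms)
  have f2: "finite ?S2" by (rule finite_subset[of _ "X \<times> Y"]) (auto simp: assms)
  have d: "?S1 \<inter> ?S2 = {}" by auto
  have "card (X \<times> Y) = card ?S1 + card ?S2" unfolding u using f1 f2 d by (simp add: card_Un_disjoint)
  then show ?thesis using c2 by (simp add: ninv_def card_cartesian_product)
qed

lemma nneg_Un:
  assumes "finite A" "finite B" "A \<inter> B = {}"
  shows "nneg p (A \<union> B) = nneg p A + nneg p B"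
proof -
  have "{i \<in> A \<union> B. p < i} = {i \<in> A. p < i} \<union> {i \<in> B. p < i}" by auto
  then show ?thesis unfolding nneg_def by (simp only:) (rule card_Un_disjoint, use assms in auto)
qed

lemma neg1_parity:
  assumes "even (a + b)"
  shows "(-1::real) ^ a = (-1) ^ b"
  using assms by (metis even_add neg_one_even_power neg_one_odd_power)

lemma sign_main:
  assumes "finite J" "finite C"
  shows "cl_sign p J C * cl_sign p ((J - C) \<union> (C - J)) J * cl_sign p J J
         = (-1) ^ (card J * card C + card (J \<inter> C))"
proof -
  define P where "P = J \<inter> C"
  define Q where "Q = J - C"
  define R where "R = C - J"
  have fP: "finite P" and fQ: "finite Q" and fR: "finite R" using assms by (auto simp: P_def Q_def R_def)
  have dPQ: "P \<inter> Q = {}" and dPR: "P \<inter> R = {}" and dQR: "Q \<inter> R = {}" and dQP: "Q \<inter> P = {}" and dRP: "R \<inter> P = {}"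
    by (auto simp: P_def Q_def R_def)
  have J: "J = P \<union> Q" and C: "C = P \<union> R" and D: "(J - C) \<union> (C - J) = Q \<union> R"
    and JC: "J \<inter> C = P" and DJ: "(Q \<union> R) \<inter> (P \<union> Q) = Q" and JJ: "(P \<union> Q) \<inter> (P \<union> Q) = P \<union> Q"
    by (auto simp: P_def Q_def R_def)
  have e1: "ninv (P \<union> Q) (P \<union> R) = ninv P P + ninv P R + ninv Q P + ninv Q R"
    using fP fQ fR dPQ dPR by (simp add: ninv_Un_left ninv_Un_right)
  have e2: "ninv (Q \<union> R) (P \<union> Q) = ninv Q P + ninv Q Q + ninv R P + ninv R Q"
    using fP fQ fR dPQ dQR by (simp add: ninv_Un_left ninv_Un_right)
  have e3: "ninv (P \<union> Q) (P \<union> Q) = ninv P P + ninv P Q + ninv Q P + ninv Q Q"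
    using fP fQ fR dPQ by (simp add: ninv_Un_left ninv_Un_right)
  have n3: "nneg p (P \<union> Q) = nneg p P + nneg p Q" using fP fQ dPQ by (simp add: nneg_Un)
  have s1: "ninv P Q + ninv Q P = card P * card Q" using fP fQ dPQ by (rule ninv_swap)
  have s2: "ninv P R + ninv R P = card P * card R" using fP fR dPR by (rule ninv_swap)
  have s3: "ninv Q R + ninv R Q = card Q * card R" using fQ fR dQR by (rule ninv_swap)
  define K where "K = ninv P P + ninv Q P + ninv Q Q + nneg p P + nneg p Q"
  have E: "ninv (P \<union> Q) (P \<union> R) + nneg p P + (ninv (Q \<union> R) (P \<union> Q) + nneg p Q)
      + (ninv (P \<union> Q) (P \<union> Q) + nneg p (P \<union> Q))
      = 2 * K + (card P * card Q + card P * card R + card Q * card R)"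
    unfolding e1 e2 e3 n3 K_def s1[symmetric] s2[symmetric] s3[symmetric] by simp
  have cJ: "card J = card P + card Q" unfolding J using fP fQ dPQ by (simp add: card_Un_disjoint)
  have cC: "card C = card P + card R" unfolding C using fP fR dPR by (simp add: card_Un_disjoint)
  have T: "card J * card C + card (J \<inter> C) = (card P + card Q) * (card P + card R) + card P"
    unfolding cJ cC JC ..
  have ev: "even (2 * K + (card P * card Q + card P * card R + card Q * card R)
      + ((card P + card Q) * (card P + card R) + card P))"
  proof -
    have "2 * K + (card P * card Q + card P * card R + card Q * card R)
      + ((card P + card Q) * (card P + card R) + card P)
      = 2 * (K + card P * card Q + card P * card R + card Q * card R) + (card P * card P + card P)"
      by (simp add: algebra_simps)
    then show ?thesis by simp
  qed
  have "cl_sign p J C * cl_sign p ((J - C) \<union> (C - J)) J * cl_sign p J J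
     = (-1) ^ (ninv (P \<union> Q) (P \<union> R) + nneg p P + (ninv (Q \<union> R) (P \<union> Q) + nneg p Q)
      + (ninv (P \<union> Q) (P \<union> Q) + nneg p (P \<union> Q)))"
    unfolding D cl_sign_alt power_add[symmetric] using J C JC DJ JJ by simp
  also have "\<dots> = (-1) ^ (card J * card C + card (J \<inter> C))"
    unfolding E T by (rule neg1_parity[OF ev])
  finally show ?thesis .
qed


lemma conj_basis:
  assumes J: "J \<subseteq> {1..p+q}" and a: "a \<in> cl_carrier p q"
  shows "cl_mult p q (cl_mult p q (cl_basis J) a) (cl_upJ p q J) C = a C * (-1) ^ (card J * card C + card (J \<inter> C))"
proof -
  let ?N = "{1..p+q}" let ?D = "(J - C) \<union> (C - J)"
  have e: "cl_mult p q (cl_mult p q (cl_basis J) a) (cl_upJ p q J) C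
      = (if ?D \<subseteq> ?N then cl_mult p q (mono J 1) a ?D * cl_sign p J J * cl_sign p ?D J else 0)"
    unfolding basis_mono upJ_mono[OF J] by (rule mult_mono_right[OF J])
  show ?thesis
  proof (cases "C \<subseteq> ?N")
    case True
    have fJ: "finite J" using J finite_subset by blast
    have fC: "finite C" using True finite_subset by blast
    have DN: "?D \<subseteq> ?N" using True J by blast
    have DD: "(J - ?D) \<union> (?D - J) = C" by blast
    have "cl_mult p q (mono J 1) a ?D = a C * cl_sign p J C"
      using mult_mono_left[OF J, of 1 a ?D] unfolding DD using True by simp
    then have "cl_mult p q (cl_mult p q (cl_basis J) a) (cl_upJ p q J) C
       = a C * (cl_sign p J C * cl_sign p ?D J * cl_sign p J J)"
      unfolding e using DN by simp
    then show ?thesis using sign_main[OF fJ fC, of p] by simp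
  next
    case False
    then obtain c where c: "c \<in> C" "c \<notin> ?N" by blast
    then have "c \<notin> J" using J by blast
    then have nD: "\<not> ?D \<subseteq> ?N" using c by blast
    have aC: "a C = 0" using a False unfolding cl_carrier_def by blast
    show ?thesis unfolding e by (subst if_not_P[OF nD]) (simp add: aC)
  qed
qed

lemma toggle_sum:
  assumes "finite M" "i \<notin> M" "\<And>J. J \<subseteq> M \<Longrightarrow> f (insert i J) = - f J"
  shows "(\<Sum>J\<in>Pow (insert i M). f J) = (0::real)"
proof -
  have inj: "inj_on (insert i) (Pow M)" using assms(2) unfolding inj_on_def by (metis Diff_insert_absorb PowD subset_iff)
  have d: "Pow M \<inter> insert i ` Pow M = {}" using assms(2) by blast
  have "(\<Sum>J\<in>Pow (insert i M). f J) = (\<Sum>J\<in>Pow M. f J) + (\<Sum>J\<in>insert i ` Pow M. f J)"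
    unfolding Pow_insert using assms(1) d by (simp add: sum.union_disjoint)
  also have "(\<Sum>J\<in>insert i ` Pow M. f J) = (\<Sum>J\<in>Pow M. f (insert i J))"
    using inj by (simp add: sum.reindex)
  also have "\<dots> = (\<Sum>J\<in>Pow M. - f J)" using assms(3) by (intro sum.cong) auto
  finally show ?thesis by (simp add: sum_negf)
qed

lemma g_sum_zero:
  fixes N C :: "nat set"
  assumes fN: "finite N" and CN: "C \<subseteq> N" and Cne: "C \<noteq> {}" and nt: "\<not> (odd (card C) \<and> C = N)"
  shows "(\<Sum>J\<in>Pow N. (-1::real) ^ (card J * card C + card (J \<inter> C))) = 0"
proof -
  obtain i where iN: "i \<in> N" and odd: "odd (card C + (if i \<in> C then 1 else 0))"
  proof (cases "even (card C)")
    case True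
    then obtain i where "i \<in> C" using Cne by blast
    then show ?thesis using that True CN by auto
  next
    case False
    then have "C \<noteq> N" using nt by blast
    then obtain i where "i \<in> N" "i \<notin> C" using CN by blast
    then show ?thesis using that False by auto
  qed
  define M where "M = N - {i}"
  have NM: "N = insert i M" and iM: "i \<notin> M" and fM: "finite M" using iN fN by (auto simp: M_def)
  have fC: "finite C" using CN fN finite_subset by blast
  have "(\<Sum>J\<in>Pow (insert i M). (-1::real) ^ (card J * card C + card (J \<inter> C))) = 0"
  proof (rule toggle_sum[OF fM iM])
    fix J assume JM: "J \<subseteq> M"
    then have fJ: "finite J" and iJ: "i \<notin> J" using fM iM finite_subset by auto
    have c1: "card (insert i J) = Suc (card J)" using fJ iJ by simp
    have c2: "card (insert i J \<inter> C) = card (J \<inter> C) + (if i \<in> C then 1 else 0)"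
    proof (cases "i \<in> C")
      case True
      then have "insert i J \<inter> C = insert i (J \<inter> C)" by auto
      then show ?thesis using True fJ iJ by simp
    next
      case False
      then have "insert i J \<inter> C = J \<inter> C" by auto
      then show ?thesis using False by simp
    qed
    have "card (insert i J) * card C + card (insert i J \<inter> C)
        = (card J * card C + card (J \<inter> C)) + (card C + (if i \<in> C then 1 else 0))"
      unfolding c1 c2 by simp
    then show "(-1::real) ^ (card (insert i J) * card C + card (insert i J \<inter> C))
        = - ((-1) ^ (card J * card C + card (J \<inter> C)))"
      using odd by (simp add: power_add)
  qed
  then show ?thesis using NM by simp
qed

lemma g_sum_full:
  fixes N :: "nat set"
  assumes fN: "finite N" and odd: "odd (card N)"
  shows "(\<Sum>J\<in>Pow N. (-1::real) ^ (card J * card N + card (J \<inter> N))) = 2 ^ card N"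
proof -
  have "(\<Sum>J\<in>Pow N. (-1::real) ^ (card J * card N + card (J \<inter> N))) = (\<Sum>J\<in>Pow N. 1)"
  proof (intro sum.cong refl)
    fix J assume "J \<in> Pow N"
    then have "J \<inter> N = J" by auto
    moreover have "even (card J * card N + card J)" using odd by simp
    ultimately show "(-1::real) ^ (card J * card N + card (J \<inter> N)) = 1" by simp
  qed
  then show ?thesis using fN by (simp add: card_Pow)
qed

lemma g_sum_empty:
  fixes N :: "nat set"
  assumes fN: "finite N"
  shows "(\<Sum>J\<in>Pow N. (-1::real) ^ (card J * card {} + card (J \<inter> {}))) = 2 ^ card N"
  using fN by (simp add: card_Pow)


lemma star_carrier: "a \<in> cl_carrier p q \<Longrightarrow> cl_star a \<in> cl_carrier p q"
  by (simp add: cl_carrier_def cl_star_def)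

lemma sum_conj:
  assumes "x \<in> cl_carrier p q"
  shows "(\<Sum>J\<in>Pow {1..p+q}. cl_mult p q (cl_mult p q (cl_basis J) x) (cl_upJ p q J) C)
       = x C * (\<Sum>J\<in>Pow {1..p+q}. (-1::real) ^ (card J * card C + card (J \<inter> C)))"
  unfolding sum_distrib_left using assms by (intro sum.cong refl) (simp add: conj_basis)

theorem theorem1:
  fixes p q :: nat and a :: cl
  assumes "p + q \<ge> 1"
    and "a \<in> cl_carrier p q"
  shows "(even (p + q) \<longrightarrow>
            (\<forall>C. cl_grade0 a C = 1 / 2 ^ (p + q) *
               (\<Sum>J\<in>Pow {1..p+q}. cl_mult p q (cl_mult p q (cl_basis J) a) (cl_upJ p q J) C)))
       \<and> (odd (p + q) \<longrightarrow>
            (\<forall>C. cl_grade0 a C = 1 / 2 ^ (p + q + 1) *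
               (\<Sum>J\<in>Pow {1..p+q}. cl_mult p q (cl_mult p q (cl_basis J) a) (cl_upJ p q J) C)
             + 1 / 2 ^ (p + q + 1) *
               (\<Sum>J\<in>Pow {1..p+q}. cl_mult p q (cl_mult p q (cl_basis J) (cl_star a)) (cl_upJ p q J) C)))"
proof -
  let ?N = "{1..p+q}"
  define G where "G C = (\<Sum>J\<in>Pow ?N. (-1::real) ^ (card J * card C + card (J \<inter> C)))" for C
  have fN: "finite ?N" by simp
  have cN: "card ?N = p + q" by simp
  have S1: "(\<Sum>J\<in>Pow ?N. cl_mult p q (cl_mult p q (cl_basis J) a) (cl_upJ p q J) C) = a C * G C" for C
    unfolding G_def by (rule sum_conj[OF assms(2)])
  have S2: "(\<Sum>J\<in>Pow ?N. cl_mult p q (cl_mult p q (cl_basis J) (cl_star a)) (cl_upJ p q J) C) = cl_star a C * G C" for C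
    unfolding G_def by (rule sum_conj[OF star_carrier[OF assms(2)]])
  have G0: "G {} = 2 ^ (p + q)" unfolding G_def using g_sum_empty[OF fN] cN by simp
  have Gz: "G C = 0" if "C \<subseteq> ?N" "C \<noteq> {}" "\<not> (odd (card C) \<and> C = ?N)" for C
    unfolding G_def by (rule g_sum_zero[OF fN that])
  have out: "a C = 0" if "\<not> C \<subseteq> ?N" for C using assms(2) that unfolding cl_carrier_def by blast
  have ne: "?N \<noteq> {}" using assms(1) by auto
  show ?thesis
  proof (intro conjI impI allI)
    fix C assume ev: "even (p + q)"
    show "cl_grade0 a C = 1 / 2 ^ (p + q) * (\<Sum>J\<in>Pow ?N. cl_mult p q (cl_mult p q (cl_basis J) a) (cl_upJ p q J) C)"
    proof (cases "C = {}")
      case True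
      then show ?thesis unfolding S1 using G0 by (simp add: cl_grade0_def)
    next
      case False
      have "a C * G C = 0"
      proof (cases "C \<subseteq> ?N")
        case True
        have "\<not> (odd (card C) \<and> C = ?N)" using ev cN by auto
        then show ?thesis using Gz[OF True False] by simp
      qed (simp add: out)
      then show ?thesis unfolding S1 using False by (simp add: cl_grade0_def)
    qed
  next
    fix C assume od: "odd (p + q)"
    show "cl_grade0 a C = 1 / 2 ^ (p + q + 1) * (\<Sum>J\<in>Pow ?N. cl_mult p q (cl_mult p q (cl_basis J) a) (cl_upJ p q J) C)
             + 1 / 2 ^ (p + q + 1) * (\<Sum>J\<in>Pow ?N. cl_mult p q (cl_mult p q (cl_basis J) (cl_star a)) (cl_upJ p q J) C)"
      unfolding S1 S2
    proof (cases "C = {}")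
      case True
      then show "cl_grade0 a C = 1 / 2 ^ (p + q + 1) * (a C * G C) + 1 / 2 ^ (p + q + 1) * (cl_star a C * G C)"
        using True G0 by (simp add: cl_grade0_def cl_star_def)
    next
      case False
      have "a C * G C + cl_star a C * G C = 0"
      proof (cases "C \<subseteq> ?N")
        case True
        show ?thesis
        proof (cases "C = ?N")
          case True
          then have "card C = p + q" using cN by simp
          then have "cl_star a C = - a C" using od by (simp add: cl_star_def)
          then show ?thesis by simp
        next
          case nN: False
          then show ?thesis using Gz[OF True False] by simp
        qed
      qed (simp add: out cl_star_def)
      then have "1 / 2 ^ (p + q + 1) * (a C * G C) + 1 / 2 ^ (p + q + 1) * (cl_star a C * G C) = 0"
        by (metis distrib_left mult_zero_right)
      then show "cl_grade0 a C = 1 / 2 ^ (p + q + 1) * (a C * G C) + 1 / 2 ^ (p + q + 1) * (cl_star a C * G C)"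
        using False by (simp add: cl_grade0_def)
    qed
  qed
qed

end
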